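(* Let $d\ge2$ and $k\ge0$ be integers, let $p_k=m_k+2d^k-1$, and let $W=W(D_{p_k,d};q)$. Then $[q^{2k}]W\le[q^{2k+1}]W=[q^{2k+2}]W$.
   Context: For a connected graph $G$, $W(G;q)=\sum_{\{u,v\}}q^{d(u,v)}$ over unordered pairs of distinct vertices, $d$ the graph distance; $[q^i]f$ is the coefficient of $q^i$ in $f$. The $d$-ary dendrimer $D_{n,d}$ is the tree on vertex set $\{1,\ldots,n\}$ defined inductively: $D_{1,d}$ is the single vertex $1$, and $D_{n,d}$ is obtained from $D_{n-1,d}$ by attaching a new leaf $n$ to the smallest-numbered vertex of $D_{n-1,d}$ having degree $\le d$. $m_k=3+2d\frac{d^k-1}{d-1}$. *)

theory Defs
  imports "HOL-Computational_Algebra.Polynomial"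
begin

text \<open>Graphs on vertex set {1..n}, edges as two-element sets of naturals.\<close>

definition vdeg :: "nat set set \<Rightarrow> nat \<Rightarrow> nat" where
  "vdeg E v = card {e \<in> E. v \<in> e}"

fun dend_edges :: "nat \<Rightarrow> nat \<Rightarrow> nat set set" where
  "dend_edges d 0 = {}"
| "dend_edges d (Suc 0) = {}"
| "dend_edges d (Suc (Suc n)) =
     (let E = dend_edges d (Suc n);
          v = (LEAST v. v \<in> {1..Suc n} \<and> vdeg E v \<le> d)
      in insert {v, Suc (Suc n)} E)"

definition is_walk :: "nat set set \<Rightarrow> nat list \<Rightarrow> bool" where
  "is_walk E xs \<longleftrightarrow> xs \<noteq> [] \<and> (\<forall>i. Suc i < length xs \<longrightarrow> {xs ! i, xs ! Suc i} \<in> E)"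

definition gdist :: "nat set set \<Rightarrow> nat \<Rightarrow> nat \<Rightarrow> nat" where
  "gdist E u v = (LEAST k. \<exists>xs. is_walk E xs \<and> length xs = Suc k \<and> hd xs = u \<and> last xs = v)"

definition wiener_poly :: "nat \<Rightarrow> nat set set \<Rightarrow> int poly" where
  "wiener_poly n E = (\<Sum>u\<in>{1..n}. \<Sum>v\<in>{u<..n}. monom 1 (gdist E u v))"

definition dendrimer_W :: "nat \<Rightarrow> nat \<Rightarrow> int poly" where
  "dendrimer_W n d = wiener_poly n (dend_edges d n)"

definition m_k :: "nat \<Rightarrow> nat \<Rightarrow> nat" where
  "m_k d k = 3 + 2 * d * ((d ^ k - 1) div (d - 1))"

end

theory Submission
  imports Defs
begin


definition pr :: "nat \<Rightarrow> nat \<Rightarrow> nat" where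
  "pr d v = (v - 3) div d + 1"

lemma pr_less: "d \<ge> 1 \<Longrightarrow> v \<ge> 2 \<Longrightarrow> pr d v < v"
proof -
  assume "d \<ge> 1" "v \<ge> 2"
  have "(v - 3) div d \<le> v - 3" by (rule div_le_dividend)
  thus ?thesis using \<open>v \<ge> 2\<close> unfolding pr_def by linarith
qed

lemma pr_ge1: "1 \<le> pr d v" unfolding pr_def by simp
lemma pr_ge1s[simp]: "Suc 0 \<le> pr d v" unfolding pr_def by simp

lemma pr_one: "pr d 1 = 1" unfolding pr_def by simp

lemma pr_le: "d \<ge> 1 \<Longrightarrow> v \<ge> 1 \<Longrightarrow> pr d v \<le> v"
  using pr_less[of d v] pr_one[of d] by (cases "v = 1") auto

lemma pr_mono: "x \<le> y \<Longrightarrow> pr d x \<le> pr d y"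
  unfolding pr_def by (simp add: div_le_mono)

function dd :: "nat \<Rightarrow> nat \<Rightarrow> nat \<Rightarrow> nat" where
  "dd d u v = (if u = v \<or> u = 0 \<or> v = 0 \<or> d = 0 then 0
     else if u < v then Suc (dd d u (pr d v)) else Suc (dd d (pr d u) v))"
  by auto
termination
proof (relation "measure (\<lambda>(d,u,v). u + v)")
  show "wf (measure (\<lambda>(d, u, v). u + v))" by simp
next
  fix d u v :: nat
  assume "\<not> (u = v \<or> u = 0 \<or> v = 0 \<or> d = 0)" "u < v"
  then have "pr d v < v" by (intro pr_less) auto
  thus "((d, u, pr d v), d, u, v) \<in> measure (\<lambda>(d, u, v). u + v)" by simp
next
  fix d u v :: nat
  assume "\<not> (u = v \<or> u = 0 \<or> v = 0 \<or> d = 0)" "\<not> u < v"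
  then have "pr d u < u" by (intro pr_less) auto
  thus "((d, pr d u, v), d, u, v) \<in> measure (\<lambda>(d, u, v). u + v)" by simp
qed

declare dd.simps[simp del]

function hh :: "nat \<Rightarrow> nat \<Rightarrow> nat" where
  "hh d x = (if x \<le> 1 \<or> d = 0 then 0 else Suc (hh d (pr d x)))"
  by auto
termination
proof (relation "measure (\<lambda>(d,x). x)")
  show "wf (measure (\<lambda>(d, x). x))" by simp
next
  fix d x :: nat assume "\<not> (x \<le> 1 \<or> d = 0)"
  then have "pr d x < x" by (intro pr_less) auto
  thus "((d, pr d x), d, x) \<in> measure (\<lambda>(d, x). x)" by simp
qed

declare hh.simps[simp del]

definition anc :: "nat \<Rightarrow> nat \<Rightarrow> nat \<Rightarrow> nat" where
  "anc d x t = (pr d ^^ (hh d x - t)) x"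

context
  fixes d :: nat
  assumes d1: "d \<ge> 1"
begin

lemma dd_same[simp]: "dd d u u = 0" by (simp add: dd.simps)

lemma dd_lt: "1 \<le> u \<Longrightarrow> u < v \<Longrightarrow> dd d u v = Suc (dd d u (pr d v))"
  using d1 by (subst dd.simps) auto

lemma dd_gt: "1 \<le> v \<Longrightarrow> v < u \<Longrightarrow> dd d u v = Suc (dd d (pr d u) v)"
  using d1 by (subst dd.simps) auto

lemma dd_pos: "1 \<le> u \<Longrightarrow> 1 \<le> v \<Longrightarrow> u \<noteq> v \<Longrightarrow> dd d u v \<ge> 1"
  using dd_lt dd_gt by (cases "u < v") auto

lemma dd_sym: "dd d u v = dd d v u"
proof (induction d u v rule: dd.induct)
  case (1 d' u v)
  show ?case
    using "1" by (subst (1 2) dd.simps) auto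
qed

lemma hh_1: "x \<le> 1 \<Longrightarrow> hh d x = 0" by (simp add: hh.simps)

lemma hh_step: "x \<ge> 2 \<Longrightarrow> hh d x = Suc (hh d (pr d x))"
  using d1 by (subst hh.simps) auto

lemma hh_pr: "x \<ge> 1 \<Longrightarrow> hh d (pr d x) = hh d x - 1"
  using hh_step[of x] pr_one[of d] hh_1 by (cases "x = 1") auto

lemma hh_zero_iff: "x \<ge> 1 \<Longrightarrow> hh d x = 0 \<longleftrightarrow> x = 1"
  using hh_step[of x] hh_1 by (cases "x = 1") auto

lemma hh_mono: "x \<le> y \<Longrightarrow> hh d x \<le> hh d y"
proof (induction y arbitrary: x rule: less_induct)
  case (less y)
  show ?case
  proof (cases "x \<le> 1")
    case True then show ?thesis by (simp add: hh_1)
  next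
    case False
    then have "x \<ge> 2" "y \<ge> 2" using less.prems by auto
    have "pr d y < y" using pr_less[OF d1 \<open>y \<ge> 2\<close>] .
    moreover have "pr d x \<le> pr d y" using pr_mono less.prems by auto
    ultimately have "hh d (pr d x) \<le> hh d (pr d y)" using less.IH by auto
    thus ?thesis using hh_step \<open>x \<ge> 2\<close> \<open>y \<ge> 2\<close> by auto
  qed
qed

lemma funpow_pr_ge1: "x \<ge> 1 \<Longrightarrow> (pr d ^^ n) x \<ge> 1"
  by (induction n) (simp_all add: pr_def)

lemma funpow_pr_le: "x \<ge> 1 \<Longrightarrow> (pr d ^^ n) x \<le> x"
proof (induction n)
  case 0 then show ?case by simp
next
  case (Suc n)
  have "pr d ((pr d ^^ n) x) \<le> (pr d ^^ n) x"
    using pr_le[OF d1 funpow_pr_ge1[OF Suc.prems]] .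
  then show ?case using Suc by simp
qed

lemma hh_funpow: "x \<ge> 1 \<Longrightarrow> hh d ((pr d ^^ n) x) = hh d x - n"
proof (induction n)
  case 0 then show ?case by simp
next
  case (Suc n)
  then show ?case using hh_pr[OF funpow_pr_ge1[OF Suc.prems, of n]] by simp
qed

lemma funpow_pr_root: "x \<ge> 1 \<Longrightarrow> (pr d ^^ hh d x) x = 1"
proof (induction x rule: less_induct)
  case (less x)
  show ?case
  proof (cases "x = 1")
    case True then show ?thesis by (simp add: hh_1)
  next
    case False
    then have x2: "x \<ge> 2" using less.prems by auto
    have "(pr d ^^ hh d (pr d x)) (pr d x) = 1"
      using less.IH[OF pr_less[OF d1 x2] pr_ge1] .
    then show ?thesis using hh_step[OF x2] by (simp add: funpow_Suc_right del: funpow.simps)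
  qed
qed

lemma anc_0: "x \<ge> 1 \<Longrightarrow> anc d x 0 = 1"
  unfolding anc_def using funpow_pr_root by simp

lemma anc_self: "anc d x (hh d x) = x"
  unfolding anc_def by simp

lemma anc_le: "x \<ge> 1 \<Longrightarrow> anc d x t \<le> x"
  unfolding anc_def by (rule funpow_pr_le)

lemma anc_ge1: "x \<ge> 1 \<Longrightarrow> anc d x t \<ge> 1"
  unfolding anc_def by (rule funpow_pr_ge1)

lemma hh_anc: "x \<ge> 1 \<Longrightarrow> t \<le> hh d x \<Longrightarrow> hh d (anc d x t) = t"
  unfolding anc_def using hh_funpow by simp

lemma anc_pr: "x \<ge> 1 \<Longrightarrow> t < hh d x \<Longrightarrow> anc d (pr d x) t = anc d x t"
proof -
  assume x: "x \<ge> 1" "t < hh d x"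
  have "hh d (pr d x) = hh d x - 1" using hh_pr x by simp
  then have e: "hh d x - t = Suc (hh d (pr d x) - t)" using x by simp
  show ?thesis unfolding anc_def e by (simp add: funpow_Suc_right del: funpow.simps)
qed

lemma dd_root: "x \<ge> 1 \<Longrightarrow> dd d 1 x = hh d x"
proof (induction x rule: less_induct)
  case (less x)
  show ?case
  proof (cases "x = 1")
    case True then show ?thesis by (simp add: hh_1)
  next
    case False
    then have x2: "x \<ge> 2" using less.prems by auto
    have "dd d 1 (pr d x) = hh d (pr d x)"
      using less.IH[OF pr_less[OF d1 x2] pr_ge1] .
    then show ?thesis using hh_step[OF x2] dd_lt[of 1 x] x2 by simp
  qed
qed

lemma dd_upper:
  "1 \<le> u \<Longrightarrow> 1 \<le> v \<Longrightarrow> t \<le> hh d u \<Longrightarrow> t \<le> hh d v \<Longrightarrow> anc d u t = anc d v t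
   \<Longrightarrow> dd d u v + 2 * t \<le> hh d u + hh d v"
proof (induction "u + v" arbitrary: u v rule: less_induct)
  case (less u v)
  show ?case
  proof (cases "u = v")
    case True then show ?thesis using less.prems by simp
  next
    case False
    show ?thesis
    proof (cases "u < v")
      case True
      then have v2: "v \<ge> 2" using less.prems by auto
      have dv: "dd d u v = Suc (dd d u (pr d v))" using dd_lt less.prems True by simp
      show ?thesis
      proof (cases "t = hh d v")
        case True
        then have "anc d v t = v" using anc_self by simp
        moreover have "anc d u t \<le> u" using anc_le[of u t] less.prems(1) by simp
        ultimately show ?thesis using less.prems \<open>u < v\<close> by simp
      next
        case tl: False
        then have tl': "t < hh d v" using less.prems by simp
        have "dd d u (pr d v) + 2 * t \<le> hh d u + hh d (pr d v)"
          apply (rule less.hyps)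
          using less.prems tl' anc_pr[of v t] hh_pr[of v] pr_less[OF d1 v2]
          by (auto simp: pr_ge1)
        then show ?thesis using dv hh_pr[of v] less.prems tl' by simp
      qed
    next
      case False
      then have vu: "v < u" using \<open>u \<noteq> v\<close> by simp
      then have u2: "u \<ge> 2" using less.prems by auto
      have du: "dd d u v = Suc (dd d (pr d u) v)" using dd_gt less.prems vu by simp
      show ?thesis
      proof (cases "t = hh d u")
        case True
        then have "anc d u t = u" using anc_self by simp
        moreover have "anc d v t \<le> v" using anc_le[of v t] less.prems(2) by simp
        ultimately show ?thesis using less.prems vu by simp
      next
        case tl: False
        then have tl': "t < hh d u" using less.prems by simp
        have "dd d (pr d u) v + 2 * t \<le> hh d (pr d u) + hh d v"
          apply (rule less.hyps)
          using less.prems tl' anc_pr[of u t] hh_pr[of u] pr_less[OF d1 u2]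
          by (auto simp: pr_ge1)
        then show ?thesis using du hh_pr[of u] less.prems tl' by simp
      qed
    qed
  qed
qed

lemma dd_lower:
  "1 \<le> u \<Longrightarrow> 1 \<le> v \<Longrightarrow> 1 \<le> t \<Longrightarrow> t \<le> hh d u \<Longrightarrow> t \<le> hh d v \<Longrightarrow> anc d u t \<noteq> anc d v t
   \<Longrightarrow> hh d u + hh d v + 2 \<le> dd d u v + 2 * t"
proof (induction "u + v" arbitrary: u v rule: less_induct)
  case (less u v)
  show ?case
  proof (cases "u = v")
    case True then show ?thesis using less.prems by simp
  next
    case False
    show ?thesis
    proof (cases "u < v")
      case True
      then have v2: "v \<ge> 2" using less.prems by auto
      have dv: "dd d u v = Suc (dd d u (pr d v))" using dd_lt less.prems True by simp
      show ?thesis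
      proof (cases "t = hh d v")
        case True
        have "hh d u \<le> hh d v" using hh_mono \<open>u < v\<close> by simp
        then have hu: "hh d u = t" using True less.prems by simp
        have "hh d (pr d v) = t - 1" using hh_pr[of v] less.prems True by simp
        then have "u \<noteq> pr d v" using hu less.prems by auto
        then have "dd d u (pr d v) \<ge> 1" using dd_pos less.prems pr_ge1 by simp
        then show ?thesis using dv hu True by simp
      next
        case tl: False
        then have tl': "t < hh d v" using less.prems by simp
        have "hh d u + hh d (pr d v) + 2 \<le> dd d u (pr d v) + 2 * t"
          apply (rule less.hyps)
          using less.prems tl' anc_pr[of v t] hh_pr[of v] pr_less[OF d1 v2]
          by (auto simp: pr_ge1)
        then show ?thesis using dv hh_pr[of v] less.prems tl' by simp
      qed
    next
      case False
      then have vu: "v < u" using \<open>u \<noteq> v\<close> by simp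
      then have u2: "u \<ge> 2" using less.prems by auto
      have du: "dd d u v = Suc (dd d (pr d u) v)" using dd_gt less.prems vu by simp
      show ?thesis
      proof (cases "t = hh d u")
        case True
        have "hh d v \<le> hh d u" using hh_mono vu by simp
        then have hv: "hh d v = t" using True less.prems by simp
        have "hh d (pr d u) = t - 1" using hh_pr[of u] less.prems True by simp
        then have "v \<noteq> pr d u" using hv less.prems by auto
        then have "dd d (pr d u) v \<ge> 1" using dd_pos less.prems pr_ge1 by simp
        then show ?thesis using du hv True by simp
      next
        case tl: False
        then have tl': "t < hh d u" using less.prems by simp
        have "hh d (pr d u) + hh d v + 2 \<le> dd d (pr d u) v + 2 * t"
          apply (rule less.hyps)
          using less.prems tl' anc_pr[of u t] hh_pr[of u] pr_less[OF d1 u2]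
          by (auto simp: pr_ge1)
        then show ?thesis using du hh_pr[of u] less.prems tl' by simp
      qed
    qed
  qed
qed

end



lemma div_eq_iff_nat: "0 < (n::nat) \<Longrightarrow> m div n = q \<longleftrightarrow> n * q \<le> m \<and> m < n * Suc q"
proof
  assume n: "0 < n" and "m div n = q"
  then have "q * n + m mod n = m" using div_mult_mod_eq[of m n] by simp
  then show "n * q \<le> m \<and> m < n * Suc q" using mod_less_divisor[OF n, of m] by (simp add: mult.commute)
next
  assume "n * q \<le> m \<and> m < n * Suc q"
  then show "m div n = q" by (intro div_nat_eqI) auto
qed

definition ED :: "nat \<Rightarrow> nat \<Rightarrow> nat set set" where
  "ED d n = (\<lambda>v. {pr d v, v}) ` {2..n}"

definition cl :: "nat \<Rightarrow> nat \<Rightarrow> nat" where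
  "cl d u = (if u = 1 then 2 else d * (u - 1) + 3)"

context
  fixes d :: nat
  assumes d1: "d \<ge> 1"
begin

lemma pr_eq_iff: "v \<ge> 2 \<Longrightarrow> u \<ge> 1 \<Longrightarrow> pr d v = u \<longleftrightarrow> cl d u \<le> v \<and> v \<le> d * u + 2"
proof -
  assume v: "v \<ge> 2" and u: "u \<ge> 1"
  have "pr d v = u \<longleftrightarrow> (v - 3) div d = u - 1" unfolding pr_def using u by auto
  also have "\<dots> \<longleftrightarrow> d * (u - 1) \<le> v - 3 \<and> v - 3 < d * Suc (u - 1)"
    using d1 by (intro div_eq_iff_nat) auto
  also have "\<dots> \<longleftrightarrow> cl d u \<le> v \<and> v \<le> d * u + 2"
  proof (cases "u = 1")
    case True then show ?thesis unfolding cl_def using v d1 by auto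
  next
    case False
    define a where "a = d * (u - 1)"
    have a1: "a \<ge> 1" using u d1 False unfolding a_def by simp
    have e1: "d * Suc (u - 1) = d * u" using u by simp
    have e2: "cl d u = a + 3" unfolding cl_def a_def using False by simp
    show ?thesis unfolding e1 e2 a_def[symmetric] using a1 by linarith
  qed
  finally show ?thesis .
qed

lemma ED_inj: "inj_on (\<lambda>v. {pr d v, v}) {2..n}"
proof (rule inj_onI)
  fix x y assume x: "x \<in> {2..n}" and y: "y \<in> {2..n}" and e: "{pr d x, x} = {pr d y, y}"
  have "pr d x < x" "pr d y < y" using x y pr_less[OF d1] by auto
  then show "x = y" using e by (auto simp: doubleton_eq_iff)
qed

lemma vdeg_ED: "vdeg (ED d n) u = card {v \<in> {2..n}. pr d v = u \<or> v = u}"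
proof -
  have "{e \<in> ED d n. u \<in> e} = (\<lambda>v. {pr d v, v}) ` {v \<in> {2..n}. pr d v = u \<or> v = u}"
    unfolding ED_def by auto
  moreover have "inj_on (\<lambda>v. {pr d v, v}) {v \<in> {2..n}. pr d v = u \<or> v = u}"
    using ED_inj by (rule inj_on_subset) auto
  ultimately show ?thesis unfolding vdeg_def by (simp add: card_image)
qed

lemma vdeg_small:
  assumes m: "m \<ge> 1"
  shows "vdeg (ED d m) (pr d (Suc m)) \<le> d"
proof -
  define w where "w = pr d (Suc m)"
  have w1: "w \<ge> 1" unfolding w_def by (rule pr_ge1)
  have "pr d (Suc m) = w" unfolding w_def ..
  then have cw: "cl d w \<le> Suc m" "Suc m \<le> d * w + 2" using pr_eq_iff[of "Suc m" w] m w1 by auto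
  have sub: "{v \<in> {2..m}. pr d v = w \<or> v = w} \<subseteq> {cl d w..m} \<union> (if w \<ge> 2 then {w} else {})"
  proof
    fix v assume v: "v \<in> {v \<in> {2..m}. pr d v = w \<or> v = w}"
    show "v \<in> {cl d w..m} \<union> (if w \<ge> 2 then {w} else {})"
    proof (cases "pr d v = w")
      case True then show ?thesis using pr_eq_iff[of v w] v w1 by auto
    next
      case False then show ?thesis using v by auto
    qed
  qed
  have "card {v \<in> {2..m}. pr d v = w \<or> v = w} \<le> card ({cl d w..m} \<union> (if w \<ge> 2 then {w} else {}))"
    by (rule card_mono[OF _ sub]) auto
  also have "\<dots> \<le> card {cl d w..m} + card (if w \<ge> 2 then {w} else {})" by (rule card_Un_le)
  also have "\<dots> \<le> d"
  proof (cases "w = 1")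
    case True then show ?thesis using cw unfolding cl_def by simp
  next
    case False
    then have "cl d w = d * (w - 1) + 3" unfolding cl_def by simp
    moreover have "d * w = d * (w - 1) + d" using w1 by (cases w) auto
    ultimately show ?thesis using cw False w1 by simp
  qed
  finally show ?thesis unfolding w_def vdeg_ED .
qed

lemma vdeg_big:
  assumes u: "u \<ge> 1" "u < pr d (Suc m)"
  shows "vdeg (ED d m) u > d"
proof -
  define w where "w = pr d (Suc m)"
  have w1: "w \<ge> 1" unfolding w_def by (rule pr_ge1)
  have "Suc m \<ge> 2" using u pr_one[of d] by (cases "Suc m = 1") auto
  then have "w \<le> m" using pr_less[OF d1, of "Suc m"] unfolding w_def by auto
  have "pr d (Suc m) = w" unfolding w_def ..
  then have cw: "cl d w \<le> Suc m" using pr_eq_iff[of "Suc m" w] u w1 \<open>Suc m \<ge> 2\<close> by auto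
  have uw: "u < w" using u unfolding w_def by simp
  have "u \<le> w - 1" using uw by simp
  then have "d * u \<le> d * (w - 1)" by (rule mult_le_mono2)
  moreover have "cl d w = d * (w - 1) + 3" using uw u unfolding cl_def by simp
  ultimately have cr: "d * u + 2 \<le> m" using cw by linarith
  have ud: "u - 1 \<le> d * (u - 1)" using d1 by simp
  have clu2: "cl d u > u"
  proof (cases "u = 1")
    case True then show ?thesis by (simp add: cl_def)
  next
    case False
    then have "cl d u = d * (u - 1) + 3" by (simp add: cl_def)
    then show ?thesis using ud by linarith
  qed
  have clu: "cl d u \<ge> 2" "cl d u > u" using clu2 u by (auto simp: cl_def)
  have sup: "{cl d u..d * u + 2} \<union> (if u \<ge> 2 then {u} else {}) \<subseteq> {v \<in> {2..m}. pr d v = u \<or> v = u}"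
    using pr_eq_iff[of _ u] u cr clu \<open>w \<le> m\<close> uw by auto
  have disj: "{cl d u..d * u + 2} \<inter> (if u \<ge> 2 then {u} else {}) = {}" using clu by auto
  have c1: "card {cl d u..d * u + 2} + card (if u \<ge> 2 then {u} else {}) = d + 1"
  proof (cases "u = 1")
    case True then show ?thesis unfolding cl_def by simp
  next
    case False
    then have "cl d u = d * (u - 1) + 3" unfolding cl_def by simp
    moreover have "d * u = d * (u - 1) + d" using u by (cases u) auto
    ultimately show ?thesis using False u by simp
  qed
  have c2: "card ({cl d u..d * u + 2} \<union> (if u \<ge> 2 then {u} else {})) = card {cl d u..d * u + 2} + card (if u \<ge> 2 then {u} else {})"
    using disj by (intro card_Un_disjoint) auto
  have "d + 1 = card ({cl d u..d * u + 2} \<union> (if u \<ge> 2 then {u} else {}))" using c1 c2 by simp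
  also have "\<dots> \<le> card {v \<in> {2..m}. pr d v = u \<or> v = u}"
    by (rule card_mono[OF _ sup]) auto
  finally show ?thesis unfolding vdeg_ED by simp
qed

lemma least_pr:
  assumes m: "m \<ge> 1"
  shows "(LEAST v. v \<in> {1..m} \<and> vdeg (ED d m) v \<le> d) = pr d (Suc m)"
proof (rule Least_equality)
  show "pr d (Suc m) \<in> {1..m} \<and> vdeg (ED d m) (pr d (Suc m)) \<le> d"
    using vdeg_small[OF m] pr_less[OF d1, of "Suc m"] m pr_ge1[of d "Suc m"] by auto
next
  fix y assume "y \<in> {1..m} \<and> vdeg (ED d m) y \<le> d"
  then show "pr d (Suc m) \<le> y" using vdeg_big[of y m] by (meson atLeastAtMost_iff not_le)
qed

lemma dend_edges_ED: "dend_edges d n = ED d n"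
proof (induction n)
  case 0 then show ?case by (simp add: ED_def)
next
  case (Suc n)
  show ?case
  proof (cases n)
    case 0 then show ?thesis by (simp add: ED_def)
  next
    case (Suc n')
    have "dend_edges d (Suc n) = insert {pr d (Suc n), Suc n} (ED d n)"
      using Suc.IH least_pr[of n] Suc by (simp add: Let_def)
    also have "\<dots> = ED d (Suc n)"
      unfolding ED_def using Suc by (auto simp: atLeastAtMostSuc_conv)
    finally show ?thesis .
  qed
qed

end


lemma is_walk_single: "is_walk E [x]" unfolding is_walk_def by simp

lemma is_walk_Cons2: "is_walk E (x # y # xs) \<longleftrightarrow> {x, y} \<in> E \<and> is_walk E (y # xs)"
  unfolding is_walk_def
  by (auto simp: nth_Cons split: nat.splits)

lemma is_walk_snoc: "is_walk E xs \<Longrightarrow> {last xs, y} \<in> E \<Longrightarrow> is_walk E (xs @ [y])"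
  unfolding is_walk_def
proof (intro conjI allI impI)
  fix i assume w: "xs \<noteq> [] \<and> (\<forall>i. Suc i < length xs \<longrightarrow> {xs ! i, xs ! Suc i} \<in> E)"
    and e: "{last xs, y} \<in> E" and i: "Suc i < length (xs @ [y])"
  show "{(xs @ [y]) ! i, (xs @ [y]) ! Suc i} \<in> E"
  proof (cases "Suc i < length xs")
    case True then show ?thesis using w by (simp add: nth_append)
  next
    case False
    then have "i = length xs - 1" using i by simp
    then show ?thesis using w e False by (simp add: nth_append last_conv_nth)
  qed
qed simp

context
  fixes d :: nat
  assumes d1: "d \<ge> 1"
begin

declare dd_same[OF d1, simp]

lemma dd_lip: "w \<ge> 2 \<Longrightarrow> v \<ge> 1 \<Longrightarrow>
  dd d w v \<le> dd d (pr d w) v + 1 \<and> dd d (pr d w) v \<le> dd d w v + 1"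
proof (induction v arbitrary: w rule: less_induct)
  case (less v)
  have pw: "pr d w < w" using pr_less[OF d1 less.prems(1)] .
  show ?case
  proof (cases "w = v")
    case True
    have "dd d (pr d w) w = Suc (dd d (pr d w) (pr d w))" using dd_lt[OF d1 pr_ge1 pw] .
    then show ?thesis using True by simp
  next
    case False
    show ?thesis
    proof (cases "v < w")
      case True
      then show ?thesis using dd_gt[OF d1 less.prems(2) True] by simp
    next
      case False
      then have wv: "w < v" using \<open>w \<noteq> v\<close> by simp
      have v2: "v \<ge> 2" using wv less.prems by simp
      have e1: "dd d w v = Suc (dd d w (pr d v))" using dd_lt[OF d1 _ wv] less.prems by simp
      have e2: "dd d (pr d w) v = Suc (dd d (pr d w) (pr d v))"
        using dd_lt[OF d1 pr_ge1[of d w], of v] pw wv by simp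
      have "dd d w (pr d v) \<le> dd d (pr d w) (pr d v) + 1 \<and> dd d (pr d w) (pr d v) \<le> dd d w (pr d v) + 1"
        using less.IH[OF pr_less[OF d1 v2] less.prems(1) pr_ge1] .
      then show ?thesis using e1 e2 by simp
    qed
  qed
qed

lemma ED_ge1: "{a, b} \<in> ED d n \<Longrightarrow> a \<ge> 1 \<and> b \<ge> 1"
  unfolding ED_def using pr_ge1 by (auto simp: doubleton_eq_iff)

lemma ED_lip: "{a, b} \<in> ED d n \<Longrightarrow> v \<ge> 1 \<Longrightarrow> dd d a v \<le> dd d b v + 1"
proof -
  assume e: "{a, b} \<in> ED d n" and v: "v \<ge> 1"
  then obtain w where w: "w \<in> {2..n}" "{a, b} = {pr d w, w}" unfolding ED_def by auto
  then have "(a = pr d w \<and> b = w) \<or> (a = w \<and> b = pr d w)" by (auto simp: doubleton_eq_iff)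
  then show ?thesis using dd_lip[of w v] w v by auto
qed

lemma walk_lower: "is_walk (ED d n) xs \<Longrightarrow> hd xs \<ge> 1 \<Longrightarrow> v \<ge> 1 \<Longrightarrow>
   dd d (hd xs) v \<le> length xs - 1 + dd d (last xs) v"
proof (induction xs rule: induct_list012)
  case 1 then show ?case by (simp add: is_walk_def)
next
  case (2 x) then show ?case by simp
next
  case (3 x y zs)
  have e: "{x, y} \<in> ED d n" and w: "is_walk (ED d n) (y # zs)" using "3.prems"(1) is_walk_Cons2 by auto
  have y1: "y \<ge> 1" using ED_ge1[OF e] by simp
  have "dd d y v \<le> length (y # zs) - 1 + dd d (last (y # zs)) v" using "3.IH"(2)[OF w] y1 "3.prems" by simp
  moreover have "dd d x v \<le> dd d y v + 1" using ED_lip[OF e] "3.prems" by simp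
  ultimately show ?case by simp
qed

lemma walk_upper: "u \<in> {1..n} \<Longrightarrow> v \<in> {1..n} \<Longrightarrow>
  \<exists>xs. is_walk (ED d n) xs \<and> length xs = Suc (dd d u v) \<and> hd xs = u \<and> last xs = v"
proof (induction "u + v" arbitrary: u v rule: less_induct)
  case (less u v)
  show ?case
  proof (cases "u = v")
    case True then show ?thesis using is_walk_single by (intro exI[of _ "[u]"]) auto
  next
    case False
    show ?thesis
    proof (cases "u < v")
      case True
      then have v2: "v \<ge> 2" using less.prems by auto
      have pv: "pr d v < v" "pr d v \<in> {1..n}" using pr_less[OF d1 v2] pr_ge1[of d v] less.prems by auto
      obtain xs where xs: "is_walk (ED d n) xs" "length xs = Suc (dd d u (pr d v))" "hd xs = u" "last xs = pr d v"
        using less.hyps[of u "pr d v"] pv less.prems by auto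
      have "{last xs, v} \<in> ED d n" using xs(4) v2 less.prems unfolding ED_def by auto
      then have "is_walk (ED d n) (xs @ [v])" using is_walk_snoc xs by auto
      moreover have "xs \<noteq> []" using xs(2) by auto
      ultimately show ?thesis using xs dd_lt[OF d1 _ True] less.prems
        by (intro exI[of _ "xs @ [v]"]) auto
    next
      case False
      then have vu: "v < u" using \<open>u \<noteq> v\<close> by simp
      then have u2: "u \<ge> 2" using less.prems by auto
      have pu: "pr d u < u" "pr d u \<in> {1..n}" using pr_less[OF d1 u2] pr_ge1[of d u] less.prems by auto
      obtain xs where xs: "is_walk (ED d n) xs" "length xs = Suc (dd d (pr d u) v)" "hd xs = pr d u" "last xs = v"
        using less.hyps[of "pr d u" v] pu less.prems by auto
      have ne: "xs \<noteq> []" using xs(2) by auto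
      then obtain y ys where yy: "xs = y # ys" by (cases xs) auto
      have "{u, pr d u} \<in> ED d n" using u2 less.prems unfolding ED_def by (auto simp: insert_commute)
      then have "is_walk (ED d n) (u # xs)" using is_walk_Cons2 xs yy by auto
      then show ?thesis using xs dd_gt[OF d1 _ vu] less.prems ne
        by (intro exI[of _ "u # xs"]) auto
    qed
  qed
qed

lemma gdist_ED: "u \<in> {1..n} \<Longrightarrow> v \<in> {1..n} \<Longrightarrow> gdist (ED d n) u v = dd d u v"
  unfolding gdist_def
proof (rule Least_equality)
  assume "u \<in> {1..n}" "v \<in> {1..n}"
  then show "\<exists>xs. is_walk (ED d n) xs \<and> length xs = Suc (dd d u v) \<and> hd xs = u \<and> last xs = v"
    by (rule walk_upper)
next
  fix k assume uv: "u \<in> {1..n}" "v \<in> {1..n}"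
    and "\<exists>xs. is_walk (ED d n) xs \<and> length xs = Suc k \<and> hd xs = u \<and> last xs = v"
  then obtain xs where "is_walk (ED d n) xs" "length xs = Suc k" "hd xs = u" "last xs = v" by auto
  then show "dd d u v \<le> k" using walk_lower[of n xs v] uv by simp
qed

end

lemma coeff_wiener: "coeff (wiener_poly n E) r = int (card {(u, v). u \<in> {1..n} \<and> v \<in> {u<..n} \<and> gdist E u v = r})"
proof -
  have "coeff (wiener_poly n E) r = (\<Sum>u\<in>{1..n}. \<Sum>v\<in>{u<..n}. of_bool (gdist E u v = r))"
    unfolding wiener_poly_def by (simp add: coeff_sum of_bool_def)
  also have "\<dots> = (\<Sum>u\<in>{1..n}. int (card {v \<in> {u<..n}. gdist E u v = r}))"
    by (intro sum.cong refl) (simp add: Int_def)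
  also have "\<dots> = int (\<Sum>u\<in>{1..n}. card {v \<in> {u<..n}. gdist E u v = r})" by simp
  also have "(\<Sum>u\<in>{1..n}. card {v \<in> {u<..n}. gdist E u v = r}) = card (SIGMA u:{1..n}. {v \<in> {u<..n}. gdist E u v = r})"
    by (rule card_SigmaI[symmetric]) auto
  also have "(SIGMA u:{1..n}. {v \<in> {u<..n}. gdist E u v = r}) = {(u, v). u \<in> {1..n} \<and> v \<in> {u<..n} \<and> gdist E u v = r}"
    by auto
  finally show ?thesis .
qed



fun Nb :: "nat \<Rightarrow> nat \<Rightarrow> nat" where
  "Nb d 0 = 0"
| "Nb d (Suc 0) = 1"
| "Nb d (Suc (Suc j)) = d * Nb d (Suc j) + 2"

definition LL :: "nat \<Rightarrow> nat \<Rightarrow> nat" where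
  "LL d j = (if j = 0 then 1 else (d + 1) * d ^ (j - 1))"

definition vtx :: "nat \<Rightarrow> nat \<Rightarrow> nat \<Rightarrow> nat" where
  "vtx d j i = Nb d j + 1 + i"

lemma Nb_Suc: "Nb d (Suc j) = Nb d j + LL d j"
proof (induction j)
  case 0 then show ?case by (simp add: LL_def)
next
  case (Suc j)
  show ?case
  proof (cases j)
    case 0 then show ?thesis by (simp add: LL_def)
  next
    case (Suc j')
    have "Nb d (Suc (Suc j)) = d * Nb d (Suc j) + 2" by simp
    also have "\<dots> = d * Nb d j + 2 + d * LL d j" using Suc.IH by (simp add: algebra_simps)
    also have "d * Nb d j + 2 = Nb d (Suc j)" using Suc by simp
    also have "d * LL d j = LL d (Suc j)" using Suc by (simp add: LL_def algebra_simps)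
    finally show ?thesis .
  qed
qed

lemma LL_pos: "d \<ge> 1 \<Longrightarrow> LL d j \<ge> 1"
proof -
  assume "d \<ge> 1"
  then have "d ^ (j - 1) \<ge> 1" by simp
  then show ?thesis unfolding LL_def by simp
qed

lemma Nb_mono: "d \<ge> 1 \<Longrightarrow> i \<le> j \<Longrightarrow> Nb d i \<le> Nb d j"
proof (induction j)
  case 0 then show ?case by simp
next
  case (Suc j)
  then show ?case using Nb_Suc[of d j] by (cases "i = Suc j") auto
qed

lemma Nb_ge: "d \<ge> 1 \<Longrightarrow> Nb d j \<ge> j"
proof (induction j)
  case 0 then show ?case by simp
next
  case (Suc j)
  then show ?case using Nb_Suc[of d j] LL_pos[of d j] by simp
qed

lemma vtx_ge1: "vtx d j i \<ge> 1" by (simp add: vtx_def)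

lemma vtx_inj: "vtx d j a = vtx d j b \<longleftrightarrow> a = b" by (simp add: vtx_def)

context
  fixes d :: nat
  assumes d1: "d \<ge> 1"
begin

lemma pr_vtx: "pr d (vtx d (Suc (Suc j)) i) = vtx d (Suc j) (i div d)"
proof -
  have "vtx d (Suc (Suc j)) i - 3 = i + d * Nb d (Suc j)" by (simp add: vtx_def)
  then have "pr d (vtx d (Suc (Suc j)) i) = (i + d * Nb d (Suc j)) div d + 1" by (simp add: pr_def)
  also have "\<dots> = i div d + Nb d (Suc j) + 1" using d1 by simp
  finally show ?thesis by (simp add: vtx_def)
qed

lemma pr_vtx1: "i \<le> d \<Longrightarrow> pr d (vtx d 1 i) = 1"
  unfolding pr_def vtx_def using d1 by simp

lemma hh_vtx: "i < LL d j \<Longrightarrow> hh d (vtx d j i) = j"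
proof (induction j arbitrary: i rule: nat_less_induct)
  case (1 j)
  show ?case
  proof (cases j)
    case 0 then show ?thesis using "1.prems" by (simp add: LL_def vtx_def hh_1[OF d1])
  next
    case (Suc j')
    show ?thesis
    proof (cases j')
      case 0
      then have "i \<le> d" using "1.prems" Suc by (simp add: LL_def)
      moreover have "vtx d 1 i \<ge> 2" by (simp add: vtx_def)
      ultimately show ?thesis using hh_step[OF d1, of "vtx d 1 i"] pr_vtx1 hh_1[OF d1, of 1] Suc 0 by simp
    next
      case (Suc j'')
      have "i div d < LL d (Suc j'')"
        using "1.prems" \<open>j = Suc j'\<close> Suc d1 by (simp add: LL_def div_less_iff_less_mult algebra_simps)
      then have "hh d (vtx d (Suc j'') (i div d)) = Suc j''" using "1.IH" \<open>j = Suc j'\<close> Suc by simp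
      moreover have "vtx d (Suc (Suc j'')) i \<ge> 2" by (simp add: vtx_def)
      ultimately show ?thesis using hh_step[OF d1, of "vtx d (Suc (Suc j'')) i"] pr_vtx \<open>j = Suc j'\<close> Suc by simp
    qed
  qed
qed

lemma anc_vtx: "1 \<le> t \<Longrightarrow> t \<le> j \<Longrightarrow> i < LL d j \<Longrightarrow> anc d (vtx d j i) t = vtx d t (i div d ^ (j - t))"
proof (induction j arbitrary: i)
  case 0 then show ?case by simp
next
  case (Suc j)
  show ?case
  proof (cases "t = Suc j")
    case True
    then show ?thesis using anc_self[OF d1, of "vtx d (Suc j) i"] hh_vtx[OF Suc.prems(3)] by simp
  next
    case False
    then have tj: "t \<le> j" "1 \<le> j" using Suc.prems by auto
    then obtain j' where j': "j = Suc j'" by (cases j) auto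
    have hx: "hh d (vtx d (Suc j) i) = Suc j" using hh_vtx[OF Suc.prems(3)] .
    have "anc d (vtx d (Suc j) i) t = anc d (pr d (vtx d (Suc j) i)) t"
      using anc_pr[OF d1 vtx_ge1[of d "Suc j" i], of t] hx tj by simp
    also have "pr d (vtx d (Suc j) i) = vtx d j (i div d)" using pr_vtx j' by simp
    also have "i div d < LL d j"
      using Suc.prems(3) j' d1 by (simp add: LL_def div_less_iff_less_mult algebra_simps)
    then have "anc d (vtx d j (i div d)) t = vtx d t (i div d div d ^ (j - t))"
      using Suc.IH Suc.prems tj by simp
    also have "i div d div d ^ (j - t) = i div d ^ (Suc j - t)"
      using tj by (simp add: div_mult2_eq Suc_diff_le)
    finally show ?thesis .
  qed
qed

lemma decomp: "1 \<le> x \<Longrightarrow> x \<le> Nb d (Suc J) \<Longrightarrow> \<exists>j i. j \<le> J \<and> i < LL d j \<and> x = vtx d j i"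
proof (induction J)
  case 0
  then have "x = vtx d 0 0" by (simp add: vtx_def)
  then show ?case by (intro exI[of _ 0]) (simp add: LL_def)
next
  case (Suc J)
  show ?case
  proof (cases "x \<le> Nb d (Suc J)")
    case True
    then obtain j i where "j \<le> J" "i < LL d j" "x = vtx d j i" using Suc.IH Suc.prems(1) by blast
    then show ?thesis by (intro exI[of _ j] exI[of _ i]) auto
  next
    case False
    define i where "i = x - Nb d (Suc J) - 1"
    have "i < LL d (Suc J)" "x = vtx d (Suc J) i"
      using False Suc.prems Nb_Suc[of d "Suc J"] unfolding i_def vtx_def by auto
    then show ?thesis by (intro exI[of _ "Suc J"] exI[of _ i]) auto
  qed
qed

end

definition PP :: "nat \<Rightarrow> nat \<Rightarrow> nat" where
  "PP d k = Nb d (Suc k) + 3 * d ^ k"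

lemma geo: "(d::nat) \<ge> 1 \<Longrightarrow> d ^ k - 1 = (d - 1) * (\<Sum>i<k. d ^ i)"
proof (induction k)
  case 0 then show ?case by simp
next
  case (Suc k)
  have "d ^ k \<ge> 1" using Suc.prems by simp
  have "(d - 1) * (\<Sum>i<Suc k. d ^ i) = (d - 1) * (\<Sum>i<k. d ^ i) + (d - 1) * d ^ k" by (simp add: algebra_simps)
  also have "\<dots> = d ^ k - 1 + (d - 1) * d ^ k" using Suc by simp
  also have "\<dots> = d ^ Suc k - 1" using \<open>d ^ k \<ge> 1\<close> Suc.prems
    by (simp add: algebra_simps diff_mult_distrib)
  finally show ?case by simp
qed

lemma sum_shift: "(\<Sum>i<Suc k. (d::nat) ^ i) = 1 + d * (\<Sum>i<k. d ^ i)"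
  unfolding sum.lessThan_Suc_shift by (simp add: sum_distrib_left)

lemma Nb_geo: "Nb d (Suc k) = 1 + (d + 1) * (\<Sum>i<k. d ^ i)"
proof (induction k)
  case 0 then show ?case by simp
next
  case (Suc k)
  have "Nb d (Suc (Suc k)) = d * Nb d (Suc k) + 2" by simp
  also have "\<dots> = 1 + (d + 1) * (1 + d * (\<Sum>i<k. d ^ i))"
    using Suc by (simp add: algebra_simps)
  also have "\<dots> = 1 + (d + 1) * (\<Sum>i<Suc k. d ^ i)" by (simp only: sum_shift)
  finally show ?case .
qed

lemma p_eq: "(d::nat) \<ge> 2 \<Longrightarrow> m_k d k + 2 * d ^ k - 1 = PP d k"
proof -
  assume d2: "d \<ge> 2"
  define G where "G = (\<Sum>i<k. d ^ i)"
  have g: "d ^ k - 1 = (d - 1) * G" unfolding G_def using geo d2 by simp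
  then have "(d ^ k - 1) div (d - 1) = G" using d2 by simp
  then have m: "m_k d k = 3 + 2 * d * G" unfolding m_k_def by simp
  have dk: "d ^ k \<ge> 1" using d2 by simp
  have "d * G = G + (d - 1) * G" using d2 by (cases d) auto
  then have "d * G = G + d ^ k - 1" using g dk by simp
  then show ?thesis unfolding PP_def Nb_geo m G_def[symmetric] using dk by (simp add: algebra_simps)
qed



lemma idx_eq: "0 < (m::nat) \<Longrightarrow> c < B \<Longrightarrow> card {i \<in> {..<B * m}. i div m = c} = m"
proof -
  assume m: "0 < m" and c: "c < B"
  have "c * m + m \<le> B * m" using c by (metis add.commute mult_Suc mult_le_mono1 Suc_leI)
  then have "{i \<in> {..<B * m}. i div m = c} = {c * m..<c * m + m}"
    using m by (auto simp: div_eq_iff_nat algebra_simps)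
  then show ?thesis by simp
qed

lemma idx_ne: "0 < (m::nat) \<Longrightarrow> c < B \<Longrightarrow> card {i \<in> {..<B * m}. i div m \<noteq> c} = B * m - m"
proof -
  assume m: "0 < m" and c: "c < B"
  have "{i \<in> {..<B * m}. i div m \<noteq> c} = {..<B * m} - {i \<in> {..<B * m}. i div m = c}" by auto
  then have "card {i \<in> {..<B * m}. i div m \<noteq> c} = card {..<B * m} - card {i \<in> {..<B * m}. i div m = c}"
    by (simp only:) (rule card_Diff_subset, auto)
  then show ?thesis using idx_eq[OF m c] by simp
qed

lemma card_filter_image_inj:
  "inj f \<Longrightarrow> card {v \<in> f ` I. P v} = card {i \<in> I. P (f i)}"
proof -
  assume inj: "inj f"
  have "{v \<in> f ` I. P v} = f ` {i \<in> I. P (f i)}" by auto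
  then show ?thesis using inj by (simp add: card_image inj_on_subset[OF inj])
qed

lemma inj_vtx: "inj (vtx d j)" by (rule injI) (simp add: vtx_inj)
lemma inj_on_vtx: "inj_on (vtx d j) A" by (simp add: inj_on_def vtx_inj)

lemma card_Sigma_const:
  "finite A \<Longrightarrow> (\<And>a. a \<in> A \<Longrightarrow> finite (B a)) \<Longrightarrow> (\<And>a. a \<in> A \<Longrightarrow> card (B a) = c)
   \<Longrightarrow> card (Sigma A B) = card A * c"
  by (simp add: card_SigmaI)

lemma card_Sigma_le:
  "finite A \<Longrightarrow> (\<And>a. a \<in> A \<Longrightarrow> finite (B a)) \<Longrightarrow> (\<And>a. a \<in> A \<Longrightarrow> card (B a) \<le> c)
   \<Longrightarrow> card (Sigma A B) \<le> card A * c"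
proof -
  assume "finite A" "\<And>a. a \<in> A \<Longrightarrow> finite (B a)" "\<And>a. a \<in> A \<Longrightarrow> card (B a) \<le> c"
  then have "card (Sigma A B) = (\<Sum>a\<in>A. card (B a))" by (simp add: card_SigmaI)
  also have "\<dots> \<le> (\<Sum>a\<in>A. c)" by (rule sum_mono) fact
  finally show ?thesis by simp
qed

definition VV :: "nat \<Rightarrow> nat \<Rightarrow> nat set" where "VV d k = {1..PP d k}"

definition Lev :: "nat \<Rightarrow> nat \<Rightarrow> nat \<Rightarrow> nat set" where
  "Lev d k j = {x \<in> VV d k. hh d x = j}"

context
  fixes d k :: nat
  assumes d2: "d \<ge> 2"
begin

lemma d1: "d \<ge> 1" using d2 by simp

lemma three_le_LL: "3 * d ^ k \<le> LL d (Suc k)"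
  unfolding LL_def using d2 by simp

lemma VV_decomp: "x \<in> VV d k \<Longrightarrow> \<exists>j i. j \<le> Suc k \<and> i < LL d j \<and> x = vtx d j i \<and> (j = Suc k \<longrightarrow> i < 3 * d ^ k)"
proof -
  assume x: "x \<in> VV d k"
  have "x \<le> Nb d (Suc (Suc k))" using x three_le_LL Nb_Suc[of d "Suc k"] unfolding VV_def PP_def by auto
  then obtain j i where ji: "j \<le> Suc k" "i < LL d j" "x = vtx d j i" using decomp[OF d1, of x "Suc k"] x
    unfolding VV_def by auto
  moreover have "j = Suc k \<longrightarrow> i < 3 * d ^ k" using ji x unfolding VV_def PP_def vtx_def by auto
  ultimately show ?thesis by blast
qed

lemma VV_ge1: "x \<in> VV d k \<Longrightarrow> x \<ge> 1" unfolding VV_def by simp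

lemma hh_VV: "x \<in> VV d k \<Longrightarrow> hh d x \<le> Suc k"
  using VV_decomp hh_vtx[OF d1] by force

lemma vtx_in_VV: "j \<le> k \<Longrightarrow> i < LL d j \<Longrightarrow> vtx d j i \<in> VV d k"
proof -
  assume j: "j \<le> k" and i: "i < LL d j"
  have "vtx d j i \<le> Nb d (Suc j)" using i Nb_Suc[of d j] unfolding vtx_def by simp
  also have "\<dots> \<le> Nb d (Suc k)" using Nb_mono[OF d1] j by simp
  finally show ?thesis unfolding VV_def PP_def by (simp add: vtx_def)
qed

lemma vtx_in_VV_last: "i < 3 * d ^ k \<Longrightarrow> vtx d (Suc k) i \<in> VV d k"
  unfolding VV_def PP_def vtx_def by simp

lemma Lev_eq: "j \<le> k \<Longrightarrow> Lev d k j = vtx d j ` {..<LL d j}"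
proof
  assume j: "j \<le> k"
  show "Lev d k j \<subseteq> vtx d j ` {..<LL d j}"
  proof
    fix x assume x: "x \<in> Lev d k j"
    then obtain j' i where ji: "j' \<le> Suc k" "i < LL d j'" "x = vtx d j' i"
      using VV_decomp unfolding Lev_def by blast
    then have "j' = j" using x hh_vtx[OF d1] unfolding Lev_def by auto
    then show "x \<in> vtx d j ` {..<LL d j}" using ji by auto
  qed
  show "vtx d j ` {..<LL d j} \<subseteq> Lev d k j"
    using vtx_in_VV j hh_vtx[OF d1] unfolding Lev_def by auto
qed

lemma Lev_last: "Lev d k (Suc k) = vtx d (Suc k) ` {..<3 * d ^ k}"
proof
  show "Lev d k (Suc k) \<subseteq> vtx d (Suc k) ` {..<3 * d ^ k}"
  proof
    fix x assume x: "x \<in> Lev d k (Suc k)"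
    then obtain j' i where ji: "j' \<le> Suc k" "i < LL d j'" "x = vtx d j' i" "j' = Suc k \<longrightarrow> i < 3 * d ^ k"
      using VV_decomp unfolding Lev_def by blast
    then have "j' = Suc k" using x hh_vtx[OF d1] unfolding Lev_def by auto
    then show "x \<in> vtx d (Suc k) ` {..<3 * d ^ k}" using ji by auto
  qed
  show "vtx d (Suc k) ` {..<3 * d ^ k} \<subseteq> Lev d k (Suc k)"
    using vtx_in_VV_last hh_vtx[OF d1] three_le_LL unfolding Lev_def by fastforce
qed

lemma finite_Lev: "finite (Lev d k j)" unfolding Lev_def VV_def by simp

lemma card_Lev_last: "card (Lev d k (Suc k)) = 3 * d ^ k"
  unfolding Lev_last by (simp add: card_image[OF inj_on_vtx])

lemma card_Lev: "j \<le> k \<Longrightarrow> card (Lev d k j) = LL d j"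
  using Lev_eq by (simp add: card_image[OF inj_on_vtx])

lemma anc1_vtx: "1 \<le> j \<Longrightarrow> i < LL d j \<Longrightarrow> anc d (vtx d j i) 1 = vtx d 1 (i div d ^ (j - 1))"
  using anc_vtx[OF d1] by simp

lemma anc_root1: "anc d 1 1 = 1"
  unfolding anc_def using hh_1[OF d1, of 1] by simp

lemma count_full: "j \<le> k \<Longrightarrow> c \<le> d \<Longrightarrow> card {v \<in> Lev d k j. anc d v 1 \<noteq> vtx d 1 c} = d ^ j"
proof -
  assume j: "j \<le> k" and c: "c \<le> d"
  show ?thesis
  proof (cases j)
    case 0
    have "Lev d k j = {1}" using Lev_eq[OF j] 0 by (simp add: LL_def vtx_def lessThan_Suc)
    moreover have "anc d 1 1 \<noteq> vtx d 1 c" using anc_root1 by (simp add: vtx_def)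
    ultimately have "{v \<in> Lev d k j. anc d v 1 \<noteq> vtx d 1 c} = {1}" by auto
    then show ?thesis using 0 by simp
  next
    case (Suc j')
    have "card {v \<in> Lev d k j. anc d v 1 \<noteq> vtx d 1 c} = card {i \<in> {..<LL d j}. anc d (vtx d j i) 1 \<noteq> vtx d 1 c}"
      unfolding Lev_eq[OF j] by (rule card_filter_image_inj[OF inj_vtx])
    also have "{i \<in> {..<LL d j}. anc d (vtx d j i) 1 \<noteq> vtx d 1 c} = {i \<in> {..<(d + 1) * d ^ j'}. i div d ^ j' \<noteq> c}"
      using anc1_vtx[of j] Suc by (auto simp: LL_def vtx_inj)
    also have "card \<dots> = (d + 1) * d ^ j' - d ^ j'" using c d1 by (intro idx_ne) auto
    also have "\<dots> = d ^ j" using Suc by simp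
    finally show ?thesis .
  qed
qed

lemma count_last: "c < 3 \<Longrightarrow> card {v \<in> Lev d k (Suc k). anc d v 1 \<noteq> vtx d 1 c} = 2 * d ^ k"
proof -
  assume c: "c < 3"
  have "card {v \<in> Lev d k (Suc k). anc d v 1 \<noteq> vtx d 1 c} = card {i \<in> {..<3 * d ^ k}. anc d (vtx d (Suc k) i) 1 \<noteq> vtx d 1 c}"
    unfolding Lev_last by (rule card_filter_image_inj[OF inj_vtx])
  also have "{i \<in> {..<3 * d ^ k}. anc d (vtx d (Suc k) i) 1 \<noteq> vtx d 1 c} = {i \<in> {..<3 * d ^ k}. i div d ^ k \<noteq> c}"
    using anc1_vtx[of "Suc k"] three_le_LL by (auto simp: vtx_inj)
  also have "card \<dots> = 3 * d ^ k - d ^ k" using c d1 by (intro idx_ne) auto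
  finally show ?thesis by simp
qed

lemma count_same: "k \<ge> 1 \<Longrightarrow> i0 < 3 * d ^ k \<Longrightarrow>
  card {v \<in> Lev d k (Suc k). anc d v 1 = anc d (vtx d (Suc k) i0) 1 \<and> anc d v 2 \<noteq> anc d (vtx d (Suc k) i0) 2}
   = d ^ k - d ^ (k - 1)"
proof -
  assume k: "k \<ge> 1" and i0: "i0 < 3 * d ^ k"
  obtain k' where k': "k = Suc k'" using k by (cases k) auto
  define c where "c = i0 div d ^ k"
  define c' where "c' = i0 div d ^ k'"
  have dk: "d ^ k = d ^ k' * d" using k' by simp
  have cc: "c = c' div d" unfolding c_def c'_def dk by (simp add: div_mult2_eq)
  have L: "i0 < LL d (Suc k)" using i0 three_le_LL by simp
  have a1: "\<And>i. i < 3 * d ^ k \<Longrightarrow> anc d (vtx d (Suc k) i) 1 = vtx d 1 (i div d ^ k)"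
    using anc1_vtx[of "Suc k"] three_le_LL by simp
  have a2: "\<And>i. i < 3 * d ^ k \<Longrightarrow> anc d (vtx d (Suc k) i) 2 = vtx d 2 (i div d ^ k')"
    using anc_vtx[OF d1, of 2 "Suc k"] three_le_LL k' by simp
  have "card {v \<in> Lev d k (Suc k). anc d v 1 = anc d (vtx d (Suc k) i0) 1 \<and> anc d v 2 \<noteq> anc d (vtx d (Suc k) i0) 2}
     = card {i \<in> {..<3 * d ^ k}. anc d (vtx d (Suc k) i) 1 = anc d (vtx d (Suc k) i0) 1 \<and> anc d (vtx d (Suc k) i) 2 \<noteq> anc d (vtx d (Suc k) i0) 2}"
    unfolding Lev_last by (rule card_filter_image_inj[OF inj_vtx])
  also have "{i \<in> {..<3 * d ^ k}. anc d (vtx d (Suc k) i) 1 = anc d (vtx d (Suc k) i0) 1 \<and> anc d (vtx d (Suc k) i) 2 \<noteq> anc d (vtx d (Suc k) i0) 2}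
     = {i \<in> {..<3 * d ^ k}. i div d ^ k = c} - {i \<in> {..<(3 * d) * d ^ k'}. i div d ^ k' = c'}"
    using a1 a2 i0 unfolding c_def c'_def by (auto simp: vtx_inj dk algebra_simps)
  also have "card \<dots> = card {i \<in> {..<3 * d ^ k}. i div d ^ k = c} - card {i \<in> {..<(3 * d) * d ^ k'}. i div d ^ k' = c'}"
  proof (rule card_Diff_subset)
    show "finite {i \<in> {..<(3 * d) * d ^ k'}. i div d ^ k' = c'}" by simp
    show "{i \<in> {..<(3 * d) * d ^ k'}. i div d ^ k' = c'} \<subseteq> {i \<in> {..<3 * d ^ k}. i div d ^ k = c}"
    proof -
      have e: "\<And>x. x div d div d ^ k' = x div d ^ k' div d" by (metis div_mult2_eq mult.commute)
      show ?thesis using cc dk e by (auto simp: div_mult2_eq algebra_simps)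
    qed
  qed
  also have "card {i \<in> {..<3 * d ^ k}. i div d ^ k = c} = d ^ k"
    using idx_eq[of "d ^ k" c 3] d1 i0 unfolding c_def by (simp add: div_less_iff_less_mult)
  also have "card {i \<in> {..<(3 * d) * d ^ k'}. i div d ^ k' = c'} = d ^ k'"
    using idx_eq[of "d ^ k'" c' "3 * d"] d1 i0 unfolding c'_def dk by (simp add: div_less_iff_less_mult algebra_simps)
  finally show ?thesis using k' by simp
qed

end



definition Opr :: "nat \<Rightarrow> nat \<Rightarrow> nat \<Rightarrow> (nat \<times> nat) set" where
  "Opr d k r = {(u, v). u \<in> VV d k \<and> v \<in> VV d k \<and> u \<noteq> v \<and> dd d u v = r}"

definition Upr :: "nat \<Rightarrow> nat \<Rightarrow> nat \<Rightarrow> (nat \<times> nat) set" where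
  "Upr d k r = {(u, v). u \<in> {1..PP d k} \<and> v \<in> {u<..PP d k} \<and> dd d u v = r}"

definition SIG :: "nat \<Rightarrow> nat \<Rightarrow> nat \<Rightarrow> nat \<Rightarrow> (nat \<times> nat) set" where
  "SIG d k j j' = (SIGMA u:Lev d k j. {v \<in> Lev d k j'. anc d v 1 \<noteq> anc d u 1})"

context
  fixes d k :: nat
  assumes d2: "d \<ge> 2"
begin

lemma d1': "d \<ge> 1" using d2 by simp

lemma G1: "1 \<le> u \<Longrightarrow> 1 \<le> v \<Longrightarrow> anc d u 1 \<noteq> anc d v 1 \<Longrightarrow> dd d u v = hh d u + hh d v"
proof -
  assume u: "1 \<le> u" and v: "1 \<le> v" and a: "anc d u 1 \<noteq> anc d v 1"
  show ?thesis
  proof (cases "hh d u = 0")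
    case True
    then have "u = 1" using hh_zero_iff[OF d1' u] by simp
    then show ?thesis using dd_root[OF d1' v] True by simp
  next
    case hu: False
    show ?thesis
    proof (cases "hh d v = 0")
      case True
      then have "v = 1" using hh_zero_iff[OF d1' v] by simp
      then show ?thesis using dd_root[OF d1' u] dd_sym[OF d1', of u v] True by simp
    next
      case hv: False
      have "hh d u + hh d v + 2 \<le> dd d u v + 2 * 1"
        using dd_lower[OF d1' u v, of 1] hu hv a by simp
      moreover have "dd d u v + 2 * 0 \<le> hh d u + hh d v"
        using dd_upper[OF d1' u v, of 0] anc_0[OF d1' u] anc_0[OF d1' v] by simp
      ultimately show ?thesis by simp
    qed
  qed
qed

lemma G2: "1 \<le> u \<Longrightarrow> 1 \<le> v \<Longrightarrow> u \<noteq> v \<Longrightarrow> anc d u 1 = anc d v 1 \<Longrightarrow>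
   1 \<le> hh d u \<and> 1 \<le> hh d v \<and> dd d u v + 2 \<le> hh d u + hh d v"
proof -
  assume u: "1 \<le> u" and v: "1 \<le> v" and uv: "u \<noteq> v" and a: "anc d u 1 = anc d v 1"
  have r: "anc d 1 1 = 1" unfolding anc_def using hh_1[OF d1', of 1] by simp
  have h1: "1 \<le> hh d u" "1 \<le> hh d v"
  proof -
    show "1 \<le> hh d u"
    proof (rule ccontr)
      assume "\<not> 1 \<le> hh d u"
      then have "u = 1" using hh_zero_iff[OF d1' u] by simp
      then have av: "anc d v 1 = 1" using a r by simp
      show False
      proof (cases "hh d v = 0")
        case True then show False using hh_zero_iff[OF d1' v] uv \<open>u = 1\<close> by simp
      next
        case False
        then have "hh d (anc d v 1) = 1" using hh_anc[OF d1' v, of 1] by simp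
        then show False using av hh_1[OF d1', of 1] by simp
      qed
    qed
    show "1 \<le> hh d v"
    proof (rule ccontr)
      assume "\<not> 1 \<le> hh d v"
      then have "v = 1" using hh_zero_iff[OF d1' v] by simp
      then have au: "anc d u 1 = 1" using a r by simp
      show False
      proof (cases "hh d u = 0")
        case True then show False using hh_zero_iff[OF d1' u] uv \<open>v = 1\<close> by simp
      next
        case False
        then have "hh d (anc d u 1) = 1" using hh_anc[OF d1' u, of 1] by simp
        then show False using au hh_1[OF d1', of 1] by simp
      qed
    qed
  qed
  moreover have "dd d u v + 2 * 1 \<le> hh d u + hh d v"
    using dd_upper[OF d1' u v, of 1] h1 a by simp
  ultimately show ?thesis by simp
qed

lemma G3: "1 \<le> u \<Longrightarrow> 1 \<le> v \<Longrightarrow> 2 \<le> hh d u \<Longrightarrow> 2 \<le> hh d v \<Longrightarrow> anc d u 2 = anc d v 2 \<Longrightarrow>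
   dd d u v + 4 \<le> hh d u + hh d v"
  using dd_upper[OF d1', of u v 2] by simp

lemma finite_Opr: "finite (Opr d k r)"
proof -
  have "Opr d k r \<subseteq> VV d k \<times> VV d k" unfolding Opr_def by auto
  then show ?thesis by (rule finite_subset) (simp add: VV_def)
qed

lemma card_Opr: "card (Opr d k r) = 2 * card (Upr d k r)"
proof -
  have fU: "finite (Upr d k r)"
  proof -
    have "Upr d k r \<subseteq> {1..PP d k} \<times> {1..PP d k}" unfolding Upr_def by auto
    then show ?thesis by (rule finite_subset) simp
  qed
  have e: "Opr d k r = Upr d k r \<union> prod.swap ` Upr d k r"
  proof
    show "Opr d k r \<subseteq> Upr d k r \<union> prod.swap ` Upr d k r"
    proof
      fix x assume x: "x \<in> Opr d k r"
      obtain u v where uv: "x = (u, v)" by (cases x)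
      show "x \<in> Upr d k r \<union> prod.swap ` Upr d k r"
      proof (cases "u < v")
        case True then show ?thesis using x uv unfolding Opr_def Upr_def VV_def by auto
      next
        case False
        then have "v < u" using x uv unfolding Opr_def by auto
        then have "(v, u) \<in> Upr d k r" using x uv dd_sym[OF d1', of u v] unfolding Opr_def Upr_def VV_def by auto
        then show ?thesis using uv by (auto intro: image_eqI[of _ _ "(v, u)"])
      qed
    qed
    show "Upr d k r \<union> prod.swap ` Upr d k r \<subseteq> Opr d k r"
      using dd_sym[OF d1'] unfolding Opr_def Upr_def VV_def by auto
  qed
  have disj: "Upr d k r \<inter> prod.swap ` Upr d k r = {}" unfolding Upr_def by auto
  have "card (Opr d k r) = card (Upr d k r) + card (prod.swap ` Upr d k r)"
    unfolding e using fU disj by (intro card_Un_disjoint) auto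
  also have "card (prod.swap ` Upr d k r) = card (Upr d k r)" by (simp add: card_image)
  finally show ?thesis by simp
qed

lemma Lev_sub: "Lev d k j \<subseteq> VV d k" unfolding Lev_def by auto

lemma anc_last: "u \<in> Lev d k (Suc k) \<Longrightarrow> \<exists>c < 3. anc d u 1 = vtx d 1 c"
proof -
  assume "u \<in> Lev d k (Suc k)"
  then obtain i where i: "i < 3 * d ^ k" "u = vtx d (Suc k) i" unfolding Lev_last[OF d2] by auto
  then have "anc d u 1 = vtx d 1 (i div d ^ k)" using anc1_vtx[OF d2, of "Suc k" i] three_le_LL[OF d2, of k] by simp
  moreover have "i div d ^ k < 3" using i d2 by (simp add: div_less_iff_less_mult)
  ultimately show ?thesis by blast
qed

lemma anc_full: "1 \<le> j \<Longrightarrow> j \<le> k \<Longrightarrow> u \<in> Lev d k j \<Longrightarrow> \<exists>c \<le> d. anc d u 1 = vtx d 1 c"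
proof -
  assume j: "1 \<le> j" "j \<le> k" and "u \<in> Lev d k j"
  then obtain i where i: "i < LL d j" "u = vtx d j i" unfolding Lev_eq[OF d2 j(2)] by auto
  then have "anc d u 1 = vtx d 1 (i div d ^ (j - 1))" using anc1_vtx[OF d2, of j i] j by simp
  moreover have "i div d ^ (j - 1) < d + 1" using i j d2 by (simp add: div_less_iff_less_mult LL_def)
  then have "i div d ^ (j - 1) \<le> d" by simp
  ultimately show ?thesis by blast
qed

lemma card_SIG_last: "card (SIG d k (Suc k) (Suc k)) = 3 * d ^ k * (2 * d ^ k)"
  unfolding SIG_def
proof (subst card_Sigma_const)
  show "finite (Lev d k (Suc k))" by (rule finite_Lev[OF d2])
  show "\<And>a. finite {v \<in> Lev d k (Suc k). anc d v 1 \<noteq> anc d a 1}" using finite_Lev[OF d2] by simp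
  show "\<And>a. a \<in> Lev d k (Suc k) \<Longrightarrow> card {v \<in> Lev d k (Suc k). anc d v 1 \<noteq> anc d a 1} = 2 * d ^ k"
    using anc_last count_last[OF d2] by force
  show "card (Lev d k (Suc k)) * (2 * d ^ k) = 3 * d ^ k * (2 * d ^ k)" using card_Lev_last[OF d2] by simp
qed

lemma card_SIG_lastj: "j \<le> k \<Longrightarrow> card (SIG d k (Suc k) j) = 3 * d ^ k * d ^ j"
  unfolding SIG_def
proof (subst card_Sigma_const)
  assume j: "j \<le> k"
  show "finite (Lev d k (Suc k))" by (rule finite_Lev[OF d2])
  show "\<And>a. finite {v \<in> Lev d k j. anc d v 1 \<noteq> anc d a 1}" using finite_Lev[OF d2] by simp
  show "\<And>a. a \<in> Lev d k (Suc k) \<Longrightarrow> card {v \<in> Lev d k j. anc d v 1 \<noteq> anc d a 1} = d ^ j"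
  proof -
    fix a assume "a \<in> Lev d k (Suc k)"
    then obtain c where "c < 3" "anc d a 1 = vtx d 1 c" using anc_last by blast
    then show "card {v \<in> Lev d k j. anc d v 1 \<noteq> anc d a 1} = d ^ j" using count_full[OF d2 j, of c] d2 by simp
  qed
  show "card (Lev d k (Suc k)) * d ^ j = 3 * d ^ k * d ^ j" using card_Lev_last[OF d2] by simp
qed

lemma card_SIG_kk: "1 \<le> k \<Longrightarrow> card (SIG d k k k) = LL d k * d ^ k"
  unfolding SIG_def
proof (subst card_Sigma_const)
  assume k: "1 \<le> k"
  show "finite (Lev d k k)" by (rule finite_Lev[OF d2])
  show "\<And>a. finite {v \<in> Lev d k k. anc d v 1 \<noteq> anc d a 1}" using finite_Lev[OF d2] by simp
  show "\<And>a. a \<in> Lev d k k \<Longrightarrow> card {v \<in> Lev d k k. anc d v 1 \<noteq> anc d a 1} = d ^ k"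
  proof -
    fix a assume "a \<in> Lev d k k"
    then obtain c where "c \<le> d" "anc d a 1 = vtx d 1 c" using anc_full[OF k] by blast
    then show "card {v \<in> Lev d k k. anc d v 1 \<noteq> anc d a 1} = d ^ k" using count_full[OF d2, of k k c] by simp
  qed
  show "card (Lev d k k) * d ^ k = LL d k * d ^ k" using card_Lev[OF d2] by simp
qed

lemma SIG_swap: "SIG d k j j' = prod.swap ` SIG d k j' j"
  unfolding SIG_def by auto

lemma card_SIG_swap: "card (SIG d k j j') = card (SIG d k j' j)"
  unfolding SIG_swap[of j j'] by (simp add: card_image)

lemma finite_SIG: "finite (SIG d k j j')"
  unfolding SIG_def using finite_Lev[OF d2] by simp

definition QQ where
  "QQ = (SIGMA u:Lev d k (Suc k). {v \<in> Lev d k (Suc k). anc d v 1 = anc d u 1 \<and> anc d v 2 \<noteq> anc d u 2})"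

lemma card_QQ: "1 \<le> k \<Longrightarrow> card QQ = 3 * d ^ k * (d ^ k - d ^ (k - 1))"
  unfolding QQ_def
proof (subst card_Sigma_const)
  assume k: "1 \<le> k"
  show "finite (Lev d k (Suc k))" by (rule finite_Lev[OF d2])
  show "\<And>a. finite {v \<in> Lev d k (Suc k). anc d v 1 = anc d a 1 \<and> anc d v 2 \<noteq> anc d a 2}" using finite_Lev[OF d2] by simp
  show "\<And>a. a \<in> Lev d k (Suc k) \<Longrightarrow> card {v \<in> Lev d k (Suc k). anc d v 1 = anc d a 1 \<and> anc d v 2 \<noteq> anc d a 2} = d ^ k - d ^ (k - 1)"
  proof -
    fix a assume "a \<in> Lev d k (Suc k)"
    then obtain i where "i < 3 * d ^ k" "a = vtx d (Suc k) i" unfolding Lev_last[OF d2] by auto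
    then show "card {v \<in> Lev d k (Suc k). anc d v 1 = anc d a 1 \<and> anc d v 2 \<noteq> anc d a 2} = d ^ k - d ^ (k - 1)"
      using count_same[OF d2 k] by simp
  qed
  show "card (Lev d k (Suc k)) * (d ^ k - d ^ (k - 1)) = 3 * d ^ k * (d ^ k - d ^ (k - 1))"
    using card_Lev_last[OF d2] by simp
qed

lemma hh_Lev: "u \<in> VV d k \<Longrightarrow> u \<in> Lev d k (hh d u)" unfolding Lev_def by simp

lemma Opr_top: "Opr d k (2 * k + 2) = SIG d k (Suc k) (Suc k)"
proof
  show "Opr d k (2 * k + 2) \<subseteq> SIG d k (Suc k) (Suc k)"
  proof
    fix x assume x: "x \<in> Opr d k (2 * k + 2)"
    obtain u v where uv: "x = (u, v)" by (cases x)
    have u: "u \<in> VV d k" and v: "v \<in> VV d k" and ne: "u \<noteq> v" and dv: "dd d u v = 2 * k + 2"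
      using x uv unfolding Opr_def by auto
    have hu: "hh d u \<le> Suc k" and hv: "hh d v \<le> Suc k" using hh_VV[OF d2] u v by auto
    have a: "anc d u 1 \<noteq> anc d v 1"
    proof
      assume "anc d u 1 = anc d v 1"
      then have "dd d u v + 2 \<le> hh d u + hh d v" using G2 VV_ge1[OF d2] u v ne by blast
      then show False using dv hu hv by simp
    qed
    then have "dd d u v = hh d u + hh d v" using G1 VV_ge1[OF d2] u v by blast
    then have "hh d u = Suc k" "hh d v = Suc k" using dv hu hv by auto
    then show "x \<in> SIG d k (Suc k) (Suc k)" using uv u v a unfolding SIG_def Lev_def by auto
  qed
  show "SIG d k (Suc k) (Suc k) \<subseteq> Opr d k (2 * k + 2)"
  proof
    fix x assume x: "x \<in> SIG d k (Suc k) (Suc k)"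
    obtain u v where uv: "x = (u, v)" by (cases x)
    have u: "u \<in> VV d k" "hh d u = Suc k" and v: "v \<in> VV d k" "hh d v = Suc k" and a: "anc d v 1 \<noteq> anc d u 1"
      using x uv unfolding SIG_def Lev_def by auto
    have "dd d u v = hh d u + hh d v" using G1 VV_ge1[OF d2] u v a by metis
    then show "x \<in> Opr d k (2 * k + 2)" using uv u v a unfolding Opr_def by auto
  qed
qed

lemma Opr_mid: "Opr d k (2 * k + 1) = SIG d k (Suc k) k \<union> SIG d k k (Suc k)"
proof
  show "Opr d k (2 * k + 1) \<subseteq> SIG d k (Suc k) k \<union> SIG d k k (Suc k)"
  proof
    fix x assume x: "x \<in> Opr d k (2 * k + 1)"
    obtain u v where uv: "x = (u, v)" by (cases x)
    have u: "u \<in> VV d k" and v: "v \<in> VV d k" and ne: "u \<noteq> v" and dv: "dd d u v = 2 * k + 1"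
      using x uv unfolding Opr_def by auto
    have hu: "hh d u \<le> Suc k" and hv: "hh d v \<le> Suc k" using hh_VV[OF d2] u v by auto
    have a: "anc d u 1 \<noteq> anc d v 1"
    proof
      assume "anc d u 1 = anc d v 1"
      then have "dd d u v + 2 \<le> hh d u + hh d v" using G2 VV_ge1[OF d2] u v ne by blast
      then show False using dv hu hv by simp
    qed
    then have "dd d u v = hh d u + hh d v" using G1 VV_ge1[OF d2] u v by blast
    then have "(hh d u = Suc k \<and> hh d v = k) \<or> (hh d u = k \<and> hh d v = Suc k)" using dv hu hv by auto
    then show "x \<in> SIG d k (Suc k) k \<union> SIG d k k (Suc k)" using uv u v a unfolding SIG_def Lev_def by auto
  qed
  show "SIG d k (Suc k) k \<union> SIG d k k (Suc k) \<subseteq> Opr d k (2 * k + 1)"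
  proof
    fix x assume x: "x \<in> SIG d k (Suc k) k \<union> SIG d k k (Suc k)"
    obtain u v where uv: "x = (u, v)" by (cases x)
    have u: "u \<in> VV d k" and v: "v \<in> VV d k" and a: "anc d v 1 \<noteq> anc d u 1"
      and h: "hh d u + hh d v = 2 * k + 1"
      using x uv unfolding SIG_def Lev_def by auto
    have "dd d u v = hh d u + hh d v" using G1 VV_ge1[OF d2] u v a by metis
    then show "x \<in> Opr d k (2 * k + 1)" using uv u v a h unfolding Opr_def by auto
  qed
qed

lemma Opr_low: "1 \<le> k \<Longrightarrow> Opr d k (2 * k) \<subseteq> SIG d k (Suc k) (k - 1) \<union> SIG d k (k - 1) (Suc k) \<union> SIG d k k k \<union> QQ"
proof
  assume k: "1 \<le> k"
  fix x assume x: "x \<in> Opr d k (2 * k)"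
  obtain u v where uv: "x = (u, v)" by (cases x)
  have u: "u \<in> VV d k" and v: "v \<in> VV d k" and ne: "u \<noteq> v" and dv: "dd d u v = 2 * k"
    using x uv unfolding Opr_def by auto
  have u1: "u \<ge> 1" and v1: "v \<ge> 1" using VV_ge1[OF d2] u v by auto
  have hu: "hh d u \<le> Suc k" and hv: "hh d v \<le> Suc k" using hh_VV[OF d2] u v by auto
  show "x \<in> SIG d k (Suc k) (k - 1) \<union> SIG d k (k - 1) (Suc k) \<union> SIG d k k k \<union> QQ"
  proof (cases "anc d u 1 = anc d v 1")
    case False
    then have "dd d u v = hh d u + hh d v" using G1 u1 v1 by blast
    then have "(hh d u = Suc k \<and> hh d v = k - 1) \<or> (hh d u = k - 1 \<and> hh d v = Suc k) \<or> (hh d u = k \<and> hh d v = k)"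
      using dv hu hv k by auto
    moreover have "hh d u = Suc k \<and> hh d v = k - 1 \<Longrightarrow> x \<in> SIG d k (Suc k) (k - 1)"
      using uv u v False unfolding SIG_def Lev_def by auto
    moreover have "hh d u = k - 1 \<and> hh d v = Suc k \<Longrightarrow> x \<in> SIG d k (k - 1) (Suc k)"
      using uv u v False unfolding SIG_def Lev_def by auto
    moreover have "hh d u = k \<and> hh d v = k \<Longrightarrow> x \<in> SIG d k k k"
      using uv u v False unfolding SIG_def Lev_def by auto
    ultimately show ?thesis by blast
  next
    case True
    then have "dd d u v + 2 \<le> hh d u + hh d v" using G2 u1 v1 ne by blast
    then have h: "hh d u = Suc k" "hh d v = Suc k" using dv hu hv by auto
    have "anc d u 2 \<noteq> anc d v 2"
    proof
      assume "anc d u 2 = anc d v 2"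
      moreover have "2 \<le> hh d u" "2 \<le> hh d v" using h k by auto
      ultimately have "dd d u v + 4 \<le> hh d u + hh d v" using G3 u1 v1 by blast
      then show False using dv h by simp
    qed
    then have "x \<in> QQ" using uv u v True h unfolding QQ_def Lev_def by auto
    then show ?thesis by blast
  qed
qed

lemma Opr_zero: "Opr d k 0 = {}"
proof -
  have "\<And>u v. u \<in> VV d k \<Longrightarrow> v \<in> VV d k \<Longrightarrow> u \<noteq> v \<Longrightarrow> dd d u v \<noteq> 0"
    using dd_pos[OF d1'] VV_ge1[OF d2] by (metis not_one_le_zero)
  then show ?thesis unfolding Opr_def by blast
qed

end



lemma arith_final:
  fixes a d :: nat
  assumes "d \<ge> 2"
  shows "2 * (3 * (d * a) * a) + ((d + 1) * a) * (d * a) + 3 * (d * a) * (d * a - a) \<le> 2 * (3 * (d * a) * (d * a))"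
proof -
  obtain e where e: "d = e + 2" using assms by (metis add.commute le_Suc_ex)
  have s: "d * a - a = (e + 1) * a" unfolding e by (simp add: algebra_simps)
  have l: "2 * (3 * (d * a) * a) + ((d + 1) * a) * (d * a) + 3 * (d * a) * ((e + 1) * a) = (a * a) * ((e + 2) * (4 * e + 12))"
    unfolding e by (simp add: algebra_simps)
  have r: "2 * (3 * (d * a) * (d * a)) = (a * a) * ((e + 2) * (6 * e + 12))"
    unfolding e by (simp add: algebra_simps)
  have "(e + 2) * (4 * e + 12) \<le> (e + 2) * (6 * e + 12)" by (rule mult_le_mono2) simp
  then have "(a * a) * ((e + 2) * (4 * e + 12)) \<le> (a * a) * ((e + 2) * (6 * e + 12))" by (rule mult_le_mono2)
  then show ?thesis unfolding s l r .
qed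

theorem lemma3p2:
  fixes d k :: nat
  assumes "d \<ge> 2"
  defines "p \<equiv> m_k d k + 2 * d ^ k - 1"
  defines "W \<equiv> dendrimer_W p d"
  shows "coeff W (2 * k) \<le> coeff W (2 * k + 1) \<and> coeff W (2 * k + 1) = coeff W (2 * k + 2)"
proof -
  have d2: "d \<ge> 2" by fact
  have d1: "d \<ge> 1" using d2 by simp
  have pP: "p = PP d k" unfolding p_def using p_eq[OF d2] .
  have cW: "coeff W r = int (card (Upr d k r))" for r
  proof -
    have "coeff W r = int (card {(u, v). u \<in> {1..p} \<and> v \<in> {u<..p} \<and> gdist (ED d p) u v = r})"
      unfolding W_def dendrimer_W_def dend_edges_ED[OF d1] by (rule coeff_wiener)
    also have "{(u, v). u \<in> {1..p} \<and> v \<in> {u<..p} \<and> gdist (ED d p) u v = r} = Upr d k r"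
      unfolding Upr_def pP[symmetric] using gdist_ED[OF d1, of _ p] by auto
    finally show ?thesis .
  qed
  have fS: "\<And>j j'. finite (SIG d k j j')" using finite_SIG[OF d2] by blast
  have top: "2 * card (Upr d k (2 * k + 2)) = 3 * d ^ k * (2 * d ^ k)"
  proof -
    have a: "card (Opr d k (2 * k + 2)) = 2 * card (Upr d k (2 * k + 2))" by (rule card_Opr[OF d2])
    have b: "card (Opr d k (2 * k + 2)) = 3 * d ^ k * (2 * d ^ k)"
      unfolding Opr_top[OF d2] by (rule card_SIG_last[OF d2])
    show ?thesis unfolding a[symmetric] by (rule b)
  qed
  have mid: "2 * card (Upr d k (2 * k + 1)) = 2 * (3 * d ^ k * d ^ k)"
  proof -
    have disj: "SIG d k (Suc k) k \<inter> SIG d k k (Suc k) = {}" unfolding SIG_def Lev_def by auto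
    have "card (Opr d k (2 * k + 1)) = card (SIG d k (Suc k) k) + card (SIG d k k (Suc k))"
      unfolding Opr_mid[OF d2] using fS disj by (intro card_Un_disjoint) auto
    also have "card (SIG d k k (Suc k)) = card (SIG d k (Suc k) k)" by (rule card_SIG_swap[OF d2])
    also have "card (SIG d k (Suc k) k) = 3 * d ^ k * d ^ k" using card_SIG_lastj[OF d2, of k k] by simp
    finally have b: "card (Opr d k (2 * k + 1)) = 3 * d ^ k * d ^ k + 3 * d ^ k * d ^ k" .
    have a: "card (Opr d k (2 * k + 1)) = 2 * card (Upr d k (2 * k + 1))" by (rule card_Opr[OF d2])
    show ?thesis unfolding a[symmetric] b by simp
  qed
  have low: "2 * card (Upr d k (2 * k)) \<le> 2 * (3 * d ^ k * d ^ k)"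
  proof (cases "k = 0")
    case True
    have a: "card (Opr d k (2 * k)) = 2 * card (Upr d k (2 * k))" by (rule card_Opr[OF d2])
    have "card (Opr d k (2 * k)) = 0" using True Opr_zero[OF d2, of k] by simp
    then show ?thesis unfolding a[symmetric] by simp
  next
    case False
    then have k1: "1 \<le> k" by simp
    then obtain k' where k': "k = Suc k'" by (cases k) auto
    have "card (Opr d k (2 * k)) \<le> card (SIG d k (Suc k) (k - 1) \<union> SIG d k (k - 1) (Suc k) \<union> SIG d k k k \<union> QQ d k)"
    proof (rule card_mono)
      have fQ: "finite (QQ d k)" using finite_Lev[OF d2] by (simp add: QQ_def[OF d2])
      then show "finite (SIG d k (Suc k) (k - 1) \<union> SIG d k (k - 1) (Suc k) \<union> SIG d k k k \<union> QQ d k)"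
        using fS by simp
      show "Opr d k (2 * k) \<subseteq> SIG d k (Suc k) (k - 1) \<union> SIG d k (k - 1) (Suc k) \<union> SIG d k k k \<union> QQ d k"
        by (rule Opr_low[OF d2 k1])
    qed
    also have "\<dots> \<le> card (SIG d k (Suc k) (k - 1)) + card (SIG d k (k - 1) (Suc k)) + card (SIG d k k k) + card (QQ d k)"
      by (meson add_le_mono card_Un_le le_trans order_refl)
    also have "card (SIG d k (k - 1) (Suc k)) = card (SIG d k (Suc k) (k - 1))" by (rule card_SIG_swap[OF d2])
    also have "card (SIG d k (Suc k) (k - 1)) = 3 * d ^ k * d ^ (k - 1)" using card_SIG_lastj[OF d2, of "k - 1" k] by simp
    also have "card (SIG d k k k) = LL d k * d ^ k" using card_SIG_kk[OF d2 k1] .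
    also have "card (QQ d k) = 3 * d ^ k * (d ^ k - d ^ (k - 1))" using card_QQ[OF d2 k1] .
    finally have "card (Opr d k (2 * k)) \<le> 2 * (3 * d ^ k * d ^ (k - 1)) + LL d k * d ^ k + 3 * d ^ k * (d ^ k - d ^ (k - 1))"
      by simp
    also have "\<dots> \<le> 2 * (3 * d ^ k * d ^ k)"
      using arith_final[OF d2, of "d ^ k'"] k' by (simp add: LL_def algebra_simps)
    finally have b: "card (Opr d k (2 * k)) \<le> 2 * (3 * d ^ k * d ^ k)" .
    have a: "card (Opr d k (2 * k)) = 2 * card (Upr d k (2 * k))" by (rule card_Opr[OF d2])
    show ?thesis unfolding a[symmetric] by (rule b)
  qed
  have n1: "card (Upr d k (2 * k)) \<le> card (Upr d k (2 * k + 1))" using mid low by linarith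
  have n2: "card (Upr d k (2 * k + 1)) = card (Upr d k (2 * k + 2))" using top mid by simp
  show ?thesis unfolding cW using n1 n2 by simp
qed


end
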